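(* Let $V$ be a finite nonempty set of voters, $A$ a finite set of alternatives, $A=B\uplus C$ a partition, and $G:\mathcal{P}(V,B)\to B$, $H:\mathcal{P}(V,C)\to C$ social choice functions. Let $F:\mathcal{P}(V,A)\to S_2(A)$ be the consular election rule $F(P)=\{G(P|_B),H(P|_C)\}$. Then $F$ satisfies SPP and SPO if and only if $G$ and $H$ are strategy-proof.
   Context: A profile over a set $X$ of alternatives assigns to each voter $i\in V$ a linear order on $X$; $\mathcal{P}(V,X)$ is the set of profiles; $P|_B$ is the profile of restrictions to $B$; $P_i'P_{-i}$ replaces voter $i$'s order by $P_i'$. A social choice function $G:\mathcal{P}(V,B)\to B$ is strategy-proof if for every profile $Q$, voter $i$ and linear order $Q_i'$ on $B$, $G(Q)\succeq_i G(Q_i'Q_{-i})$ in the order $Q_i$. $S_2(A)$ is the set of 2-element subsets of $A$. For a consular election rule $F:\mathcal{P}(V,A)\to S_2(A)$: SPO means that for all $P$, $i$, $P_i'$, $\mathrm{best}(P_i,F(P))\succeq_i\mathrm{best}(P_i,F(P_i'P_{-i}))$; SPP means the same with $\mathrm{worst}$, where $\mathrm{best}(P_i,W)$, $\mathrm{worst}(P_i,W)$ are the $P_i$-best and $P_i$-worst elements of $W$. *)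

theory Defs
  imports Main "HOL-Library.FuncSet"
begin

text \<open>A linear order on X is a relation R with (x,y) in R meaning "x is weakly preferred to y".
  Profiles are extensional functions from voters V to linear orders on X.\<close>

definition profiles :: "'v set \<Rightarrow> 'a set \<Rightarrow> ('v \<Rightarrow> 'a rel) set" where
  "profiles V X = (V \<rightarrow>\<^sub>E {R. linear_order_on X R})"

definition restr_prof :: "'v set \<Rightarrow> 'a set \<Rightarrow> ('v \<Rightarrow> 'a rel) \<Rightarrow> ('v \<Rightarrow> 'a rel)" where
  "restr_prof V B P = restrict (\<lambda>i. P i \<inter> (B \<times> B)) V"

definition best :: "'a rel \<Rightarrow> 'a set \<Rightarrow> 'a" where
  "best R W = (THE x. x \<in> W \<and> (\<forall>y\<in>W. (x, y) \<in> R))"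

definition worst :: "'a rel \<Rightarrow> 'a set \<Rightarrow> 'a" where
  "worst R W = (THE x. x \<in> W \<and> (\<forall>y\<in>W. (y, x) \<in> R))"

definition strategy_proof :: "'v set \<Rightarrow> 'a set \<Rightarrow> (('v \<Rightarrow> 'a rel) \<Rightarrow> 'a) \<Rightarrow> bool" where
  "strategy_proof V B G \<longleftrightarrow>
     (\<forall>Q\<in>profiles V B. \<forall>i\<in>V. \<forall>R'. linear_order_on B R' \<longrightarrow>
        (G Q, G (Q(i := R'))) \<in> Q i)"

definition SPO :: "'v set \<Rightarrow> 'a set \<Rightarrow> (('v \<Rightarrow> 'a rel) \<Rightarrow> 'a set) \<Rightarrow> bool" where
  "SPO V A F \<longleftrightarrow>
     (\<forall>P\<in>profiles V A. \<forall>i\<in>V. \<forall>R'. linear_order_on A R' \<longrightarrow>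
        (best (P i) (F P), best (P i) (F (P(i := R')))) \<in> P i)"

definition SPP :: "'v set \<Rightarrow> 'a set \<Rightarrow> (('v \<Rightarrow> 'a rel) \<Rightarrow> 'a set) \<Rightarrow> bool" where
  "SPP V A F \<longleftrightarrow>
     (\<forall>P\<in>profiles V A. \<forall>i\<in>V. \<forall>R'. linear_order_on A R' \<longrightarrow>
        (worst (P i) (F P), worst (P i) (F (P(i := R')))) \<in> P i)"

end

theory Submission
  imports Defs
begin

lemma linD0: "linear_order_on A R \<Longrightarrow> R \<subseteq> A \<times> A"
  unfolding linear_order_on_def by (elim conjE) (rule partial_order_onD(4))
lemma linD1: "linear_order_on A R \<Longrightarrow> x \<in> A \<Longrightarrow> (x,x) \<in> R"
  unfolding linear_order_on_def by (elim conjE) (rule refl_onD[OF partial_order_onD(1)])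
lemma linD2: "linear_order_on A R \<Longrightarrow> (x,y) \<in> R \<Longrightarrow> (y,z) \<in> R \<Longrightarrow> (x,z) \<in> R"
  unfolding linear_order_on_def by (elim conjE) (rule transD[OF partial_order_onD(2)])
lemma linD3: "linear_order_on A R \<Longrightarrow> (x,y) \<in> R \<Longrightarrow> (y,x) \<in> R \<Longrightarrow> x = y"
  unfolding linear_order_on_def by (elim conjE) (rule antisymD[OF partial_order_onD(3)])
lemma linD4: "linear_order_on A R \<Longrightarrow> x \<in> A \<Longrightarrow> y \<in> A \<Longrightarrow> (x,y) \<in> R \<or> (y,x) \<in> R"
proof -
  assume a: "linear_order_on A R" "x \<in> A" "y \<in> A"
  show ?thesis
  proof (cases "x = y")
    case True then show ?thesis using linD1[OF a(1,2)] by simp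
  next
    case False
    have "total_on A R" using a(1) unfolding linear_order_on_def by (elim conjE)
    then show ?thesis using a(2,3) False unfolding total_on_def by blast
  qed
qed
lemma linI:
  assumes "R \<subseteq> A \<times> A" "\<And>x. x \<in> A \<Longrightarrow> (x,x) \<in> R"
    "\<And>x y z. (x,y) \<in> R \<Longrightarrow> (y,z) \<in> R \<Longrightarrow> (x,z) \<in> R"
    "\<And>x y. (x,y) \<in> R \<Longrightarrow> (y,x) \<in> R \<Longrightarrow> x = y"
    "\<And>x y. x \<in> A \<Longrightarrow> y \<in> A \<Longrightarrow> (x,y) \<in> R \<or> (y,x) \<in> R"
  shows "linear_order_on A R"
  unfolding linear_order_on_def partial_order_on_def preorder_on_def
proof (intro conjI)
  show "R \<subseteq> A \<times> A" by (rule assms(1))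
  show "refl_on A R" unfolding refl_on_def using assms(2) by blast
  show "trans R" unfolding trans_on_def using assms(3) by blast
  show "antisym R" unfolding antisym_on_def using assms(4) by blast
  show "total_on A R" unfolding total_on_def using assms(5) by blast
qed

lemma exists_lin: "\<exists>L. linear_order_on X L"
proof -
  from well_ordering[where 'a='a] obtain r :: "'a rel" where r: "Well_order r" "Field r = UNIV" by (elim exE conjE)
  have lo0: "Linear_order r" using r(1) unfolding well_order_on_def by (rule conjunct1)
  have lo: "Linear_order (Restr r X)" by (rule Linear_order_Restr[OF lo0])
  have "Refl r" using lo0 unfolding linear_order_on_def partial_order_on_def preorder_on_def by (elim conjE)
  then have eq: "Field (Restr r X) = X" using Refl_Field_Restr2[of r X] r(2) by simp
  have "linear_order_on X (Restr r X)" using lo by (simp only: eq)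
  then show ?thesis by (rule exI)
qed

lemma join_lin:
  assumes R: "linear_order_on X R" and S: "linear_order_on Y S" and d: "X \<inter> Y = {}"
  shows "linear_order_on (X \<union> Y) (R \<union> X \<times> Y \<union> S)"
proof (rule linI)
  have R0: "R \<subseteq> X \<times> X" and S0: "S \<subseteq> Y \<times> Y" using linD0[OF R] linD0[OF S] .
  show "R \<union> X \<times> Y \<union> S \<subseteq> (X \<union> Y) \<times> (X \<union> Y)" using R0 S0 by blast
  show "(x, x) \<in> R \<union> X \<times> Y \<union> S" if "x \<in> X \<union> Y" for x
    using that linD1[OF R] linD1[OF S] by blast
  show "(x, z) \<in> R \<union> X \<times> Y \<union> S" if a: "(x, y) \<in> R \<union> X \<times> Y \<union> S" "(y, z) \<in> R \<union> X \<times> Y \<union> S" for x y z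
  proof -
    have "(x,y) \<in> R \<or> (x \<in> X \<and> y \<in> Y) \<or> (x,y) \<in> S" using a(1) by blast
    moreover have "(y,z) \<in> R \<or> (y \<in> X \<and> z \<in> Y) \<or> (y,z) \<in> S" using a(2) by blast
    ultimately show ?thesis using linD2[OF R, of x y z] linD2[OF S, of x y z] R0 S0 d by blast
  qed
  show "x = y" if a: "(x, y) \<in> R \<union> X \<times> Y \<union> S" "(y, x) \<in> R \<union> X \<times> Y \<union> S" for x y
  proof -
    have "(x,y) \<in> R \<or> (x \<in> X \<and> y \<in> Y) \<or> (x,y) \<in> S" using a(1) by blast
    moreover have "(y,x) \<in> R \<or> (y \<in> X \<and> x \<in> Y) \<or> (y,x) \<in> S" using a(2) by blast
    ultimately show ?thesis using linD3[OF R, of x y] linD3[OF S, of x y] R0 S0 d by blast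
  qed
  show "(x, y) \<in> R \<union> X \<times> Y \<union> S \<or> (y, x) \<in> R \<union> X \<times> Y \<union> S" if a: "x \<in> X \<union> Y" "y \<in> X \<union> Y" for x y
    using a linD4[OF R, of x y] linD4[OF S, of x y] by blast
qed

lemma join_restr:
  assumes "linear_order_on X R" "linear_order_on Y S" "X \<inter> Y = {}"
  shows "(R \<union> X \<times> Y \<union> S) \<inter> X \<times> X = R"
  using linD0[OF assms(1)] linD0[OF assms(2)] assms(3) by blast

lemma lin_restr:
  assumes R: "linear_order_on A R" and "B \<subseteq> A"
  shows "linear_order_on B (R \<inter> B \<times> B)"
proof (rule linI)
  show "R \<inter> B \<times> B \<subseteq> B \<times> B" by blast
  show "(x, x) \<in> R \<inter> B \<times> B" if "x \<in> B" for x using that linD1[OF R, of x] assms(2) by blast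
  show "(x, z) \<in> R \<inter> B \<times> B" if "(x, y) \<in> R \<inter> B \<times> B" "(y, z) \<in> R \<inter> B \<times> B" for x y z
    using that linD2[OF R, of x y z] by blast
  show "x = y" if "(x, y) \<in> R \<inter> B \<times> B" "(y, x) \<in> R \<inter> B \<times> B" for x y
    using that linD3[OF R, of x y] by blast
  show "(x, y) \<in> R \<inter> B \<times> B \<or> (y, x) \<in> R \<inter> B \<times> B" if "x \<in> B" "y \<in> B" for x y
    using that linD4[OF R, of x y] assms(2) by blast
qed

lemma best_pair:
  assumes "linear_order_on A R" "x \<in> A" "y \<in> A" "(x,y) \<in> R"
  shows "best R {x,y} = x"
  unfolding best_def
proof (rule the_equality)
  show "x \<in> {x, y} \<and> (\<forall>z\<in>{x, y}. (x, z) \<in> R)" using assms linD1[OF assms(1)] by simp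
  fix z assume "z \<in> {x, y} \<and> (\<forall>w\<in>{x, y}. (z, w) \<in> R)"
  then show "z = x" using assms linD3[OF assms(1)] by auto
qed

lemma worst_pair:
  assumes "linear_order_on A R" "x \<in> A" "y \<in> A" "(x,y) \<in> R"
  shows "worst R {x,y} = y"
  unfolding worst_def
proof (rule the_equality)
  show "y \<in> {x, y} \<and> (\<forall>z\<in>{x, y}. (z, y) \<in> R)" using assms linD1[OF assms(1)] by simp
  fix z assume "z \<in> {x, y} \<and> (\<forall>w\<in>{x, y}. (w, z) \<in> R)"
  then show "z = y" using assms linD3[OF assms(1)] by auto
qed

lemma best_mono:
  assumes L: "linear_order_on A R" and m: "b \<in> A" "c \<in> A" "b' \<in> A" "c' \<in> A"
    and o: "(b,b') \<in> R" "(c,c') \<in> R"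
  shows "(best R {b,c}, best R {b',c'}) \<in> R \<and> (worst R {b,c}, worst R {b',c'}) \<in> R"
proof -
  note rf = linD1[OF L] and tr = linD2[OF L] and tot = linD4[OF L]
  have bp: "best R {x,y} \<in> {x,y} \<and> (best R {x,y}, x) \<in> R \<and> (best R {x,y}, y) \<in> R"
    if "x \<in> A" "y \<in> A" for x y
  proof (cases "(x,y) \<in> R")
    case True
    then show ?thesis using best_pair[OF L that True] rf that by simp
  next
    case False
    then have "(y,x) \<in> R" using tot that by blast
    then have "best R {y,x} = y" using best_pair[OF L that(2,1)] by simp
    then show ?thesis using rf that \<open>(y,x) \<in> R\<close> by (simp add: insert_commute)
  qed
  have wp: "worst R {x,y} \<in> {x,y} \<and> (x, worst R {x,y}) \<in> R \<and> (y, worst R {x,y}) \<in> R"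
    if "x \<in> A" "y \<in> A" for x y
  proof (cases "(x,y) \<in> R")
    case True
    then show ?thesis using worst_pair[OF L that True] rf that by simp
  next
    case False
    then have "(y,x) \<in> R" using tot that by blast
    then have "worst R {y,x} = x" using worst_pair[OF L that(2,1)] by simp
    then show ?thesis using rf that \<open>(y,x) \<in> R\<close> by (simp add: insert_commute)
  qed
  have b1: "(best R {b,c}, b') \<in> R" "(best R {b,c}, c') \<in> R"
    using tr[OF conjunct1[OF conjunct2[OF bp[OF m(1,2)]]] o(1)] tr[OF conjunct2[OF conjunct2[OF bp[OF m(1,2)]]] o(2)] .
  have w0: "worst R {b,c} \<in> {b,c}" using wp[OF m(1,2)] by blast
  have b2: "best R {b',c'} \<in> {b',c'}" using bp[OF m(3,4)] by blast
  have w2: "(b', worst R {b',c'}) \<in> R" "(c', worst R {b',c'}) \<in> R" using wp[OF m(3,4)] by blast+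
  have w3: "(b, worst R {b',c'}) \<in> R" "(c, worst R {b',c'}) \<in> R" using tr[OF o(1) w2(1)] tr[OF o(2) w2(2)] .
  show ?thesis
  proof
    show "(best R {b,c}, best R {b',c'}) \<in> R" using b1 b2 by auto
    show "(worst R {b,c}, worst R {b',c'}) \<in> R" using w0 w3 by auto
  qed
qed

lemma restr_in:
  assumes "P \<in> profiles V A" "B \<subseteq> A"
  shows "restr_prof V B P \<in> profiles V B"
  using assms lin_restr[OF _ assms(2)] unfolding profiles_def restr_prof_def by (auto simp: PiE_iff)

lemma restr_upd:
  assumes "i \<in> V"
  shows "restr_prof V B (P(i:=R)) = (restr_prof V B P)(i := R \<inter> B \<times> B)"
  using assms unfolding restr_prof_def by (auto simp: fun_eq_iff)

lemma prof_upd: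
  assumes "P \<in> profiles V A" "i \<in> V" "linear_order_on A R"
  shows "P(i:=R) \<in> profiles V A"
  using assms unfolding profiles_def by (auto simp: PiE_iff extensional_def)

lemma spo_imp:
  assumes AXY: "A = X \<union> Y" and disj: "X \<inter> Y = {}"
    and G: "G \<in> profiles V X \<rightarrow> X" and H: "H \<in> profiles V Y \<rightarrow> Y"
    and F: "\<forall>P\<in>profiles V A. F P = {G (restr_prof V X P), H (restr_prof V Y P)}"
    and spo: "SPO V A F"
  shows "strategy_proof V X G"
  unfolding strategy_proof_def
proof (intro ballI allI impI)
  fix Q i R' assume Q: "Q \<in> profiles V X" and i: "i \<in> V" and R': "linear_order_on X R'"
  obtain L where L: "linear_order_on Y L" using exists_lin by blast
  define ext where "ext R = R \<union> X \<times> Y \<union> L" for R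
  have ext_lin: "linear_order_on A (ext R)" if "linear_order_on X R" for R
    using join_lin[OF that L disj] AXY ext_def by simp
  have ext_restr: "ext R \<inter> X \<times> X = R" if "linear_order_on X R" for R
    using join_restr[OF that L disj] ext_def by simp
  have mk_in: "restrict (\<lambda>j. ext (Q' j)) V \<in> profiles V A" if "Q' \<in> profiles V X" for Q'
    using that ext_lin unfolding profiles_def by (auto simp: PiE_iff)
  have mk_restr: "restr_prof V X (restrict (\<lambda>j. ext (Q' j)) V) = Q'" if "Q' \<in> profiles V X" for Q'
    using that ext_restr unfolding profiles_def restr_prof_def by (auto simp: fun_eq_iff PiE_iff extensional_def)
  define P where "P = restrict (\<lambda>j. ext (Q j)) V"
  define Q' where "Q' = Q(i := R')"
  have Q': "Q' \<in> profiles V X" using Q i R' unfolding Q'_def profiles_def by (auto simp: PiE_iff extensional_def)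
  have PU: "P(i := ext R') = restrict (\<lambda>j. ext (Q' j)) V"
    using i unfolding P_def Q'_def by (auto simp: fun_eq_iff)
  have P: "P \<in> profiles V A" using mk_in[OF Q] P_def by simp
  have QiL: "linear_order_on X (Q i)" using Q i unfolding profiles_def by auto
  have Pi: "P i = ext (Q i)" using i P_def by simp
  have PiL: "linear_order_on A (P i)" using Pi ext_lin QiL by simp
  define b where "b = G Q"
  define c where "c = H (restr_prof V Y P)"
  define b' where "b' = G Q'"
  define c' where "c' = H (restr_prof V Y (P(i := ext R')))"
  have XA: "X \<subseteq> A" "Y \<subseteq> A" using AXY by auto
  have bX: "b \<in> X" using G Q b_def by blast
  have b'X: "b' \<in> X" using G Q' b'_def by blast
  have cY: "c \<in> Y" using H restr_in[OF P XA(2)] c_def by blast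
  have P': "P(i := ext R') \<in> profiles V A" using PU mk_in[OF Q'] by simp
  have c'Y: "c' \<in> Y" using H restr_in[OF P' XA(2)] c'_def by blast
  have FP: "F P = {b, c}" using F P mk_restr[OF Q] unfolding b_def c_def P_def by simp
  have FP': "F (P(i := ext R')) = {b', c'}" using F P' mk_restr[OF Q'] PU unfolding b'_def c'_def by simp
  have "(best (P i) (F P), best (P i) (F (P(i := ext R')))) \<in> P i"
    using spo P i ext_lin[OF R'] unfolding SPO_def by blast
  moreover have "best (P i) (F P) = b"
  proof -
    have "(b, c) \<in> P i" using Pi ext_def bX cY by simp
    then show ?thesis unfolding FP using best_pair[OF PiL] bX cY XA by blast
  qed
  moreover have "best (P i) (F (P(i := ext R'))) = b'"
  proof -
    have "(b', c') \<in> P i" using Pi ext_def b'X c'Y by simp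
    then show ?thesis unfolding FP' using best_pair[OF PiL] b'X c'Y XA by blast
  qed
  ultimately have "(b, b') \<in> ext (Q i) \<inter> X \<times> X" using Pi bX b'X by simp
  then show "(G Q, G (Q(i := R'))) \<in> Q i" using ext_restr[OF QiL] b_def b'_def Q'_def by simp
qed

theorem proposition21:
  fixes V :: "'v set" and A B C :: "'a set"
    and G H :: "('v \<Rightarrow> 'a rel) \<Rightarrow> 'a"
    and F :: "('v \<Rightarrow> 'a rel) \<Rightarrow> 'a set"
  assumes "finite V" and "V \<noteq> {}" and "finite A"
    and "A = B \<union> C" and "B \<inter> C = {}"
    and "G \<in> profiles V B \<rightarrow> B" and "H \<in> profiles V C \<rightarrow> C"
    and "\<forall>P\<in>profiles V A. F P = {G (restr_prof V B P), H (restr_prof V C P)}"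
  shows "(SPP V A F \<and> SPO V A F) \<longleftrightarrow> (strategy_proof V B G \<and> strategy_proof V C H)"
proof
  assume "SPP V A F \<and> SPO V A F"
  then have spo: "SPO V A F" by blast
  have F2: "\<forall>P\<in>profiles V A. F P = {H (restr_prof V C P), G (restr_prof V B P)}"
    using assms(8) by (simp add: insert_commute)
  show "strategy_proof V B G \<and> strategy_proof V C H"
  proof
    show "strategy_proof V B G" using spo_imp[OF assms(4,5,6,7,8) spo] .
    have "A = C \<union> B" "C \<inter> B = {}" using assms(4,5) by auto
    then show "strategy_proof V C H" by (rule spo_imp[OF _ _ assms(7,6) F2 spo])
  qed
next
  assume sp: "strategy_proof V B G \<and> strategy_proof V C H"
  have XA: "B \<subseteq> A" "C \<subseteq> A" using assms(4) by auto
  have key: "(best (P i) (F P), best (P i) (F (P(i := R')))) \<in> P i \<and>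
             (worst (P i) (F P), worst (P i) (F (P(i := R')))) \<in> P i"
    if P: "P \<in> profiles V A" and i: "i \<in> V" and R': "linear_order_on A R'" for P i R'
  proof -
    have P': "P(i:=R') \<in> profiles V A" using prof_upd[OF P i R'] .
    have PiL: "linear_order_on A (P i)" using P i unfolding profiles_def by auto
    have rB: "restr_prof V B P \<in> profiles V B" using restr_in[OF P XA(1)] .
    have rC: "restr_prof V C P \<in> profiles V C" using restr_in[OF P XA(2)] .
    have uB: "restr_prof V B (P(i:=R')) = (restr_prof V B P)(i := R' \<inter> B \<times> B)"
      using restr_upd[OF i] .
    have uC: "restr_prof V C (P(i:=R')) = (restr_prof V C P)(i := R' \<inter> C \<times> C)"
      using restr_upd[OF i] .
    have gb: "(G (restr_prof V B P), G (restr_prof V B (P(i:=R')))) \<in> restr_prof V B P i"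
    proof -
      have spB: "\<forall>Q\<in>profiles V B. \<forall>i\<in>V. \<forall>R'. linear_order_on B R' \<longrightarrow> (G Q, G (Q(i := R'))) \<in> Q i"
        using sp unfolding strategy_proof_def by blast
      have "(G (restr_prof V B P), G ((restr_prof V B P)(i := R' \<inter> B \<times> B))) \<in> restr_prof V B P i"
        by (rule spB[rule_format, OF rB i lin_restr[OF R' XA(1)]])
      then show ?thesis using uB by simp
    qed
    have hc: "(H (restr_prof V C P), H (restr_prof V C (P(i:=R')))) \<in> restr_prof V C P i"
    proof -
      have spC: "\<forall>Q\<in>profiles V C. \<forall>i\<in>V. \<forall>R'. linear_order_on C R' \<longrightarrow> (H Q, H (Q(i := R'))) \<in> Q i"
        using sp unfolding strategy_proof_def by blast
      have "(H (restr_prof V C P), H ((restr_prof V C P)(i := R' \<inter> C \<times> C))) \<in> restr_prof V C P i"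
        by (rule spC[rule_format, OF rC i lin_restr[OF R' XA(2)]])
      then show ?thesis using uC by simp
    qed
    have gb2: "(G (restr_prof V B P), G (restr_prof V B (P(i:=R')))) \<in> P i"
    proof -
      have "restr_prof V B P i = P i \<inter> B \<times> B" using i by (simp add: restr_prof_def)
      then show ?thesis using gb by (metis IntD1)
    qed
    have hc2: "(H (restr_prof V C P), H (restr_prof V C (P(i:=R')))) \<in> P i"
    proof -
      have "restr_prof V C P i = P i \<inter> C \<times> C" using i by (simp add: restr_prof_def)
      then show ?thesis using hc by (metis IntD1)
    qed
    have m: "G (restr_prof V B P) \<in> A" "H (restr_prof V C P) \<in> A"
      "G (restr_prof V B (P(i:=R'))) \<in> A" "H (restr_prof V C (P(i:=R'))) \<in> A"
      using funcset_mem[OF assms(6) rB] funcset_mem[OF assms(7) rC]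
        funcset_mem[OF assms(6) restr_in[OF P' XA(1)]] funcset_mem[OF assms(7) restr_in[OF P' XA(2)]] XA
      by (auto dest: subsetD)
    have FP: "F P = {G (restr_prof V B P), H (restr_prof V C P)}" using assms(8) P by (rule bspec)
    have FP': "F (P(i:=R')) = {G (restr_prof V B (P(i:=R'))), H (restr_prof V C (P(i:=R')))}"
      using assms(8) P' by (rule bspec)
    show ?thesis unfolding FP FP' by (rule best_mono[OF PiL m(1,2,3,4) gb2 hc2])
  qed
  have k1: "SPP V A F" unfolding SPP_def
  proof (intro ballI allI impI)
    fix P i R' assume a: "P \<in> profiles V A" "i \<in> V" "linear_order_on A R'"
    from key[OF a] show "(worst (P i) (F P), worst (P i) (F (P(i := R')))) \<in> P i" by (rule conjunct2)
  qed
  have k2: "SPO V A F" unfolding SPO_def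
  proof (intro ballI allI impI)
    fix P i R' assume a: "P \<in> profiles V A" "i \<in> V" "linear_order_on A R'"
    from key[OF a] show "(best (P i) (F P), best (P i) (F (P(i := R')))) \<in> P i" by (rule conjunct1)
  qed
  show "SPP V A F \<and> SPO V A F" using k1 k2 by (rule conjI)
qed

end
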